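(* Let $G$ be a finite simple graph and let $L=x_1x_2\dots x_n$ be an enumeration of its vertices such that $G$ has no two secant edges with respect to $L$. Then $G$ is $3$-colorable, i.e. $\chi(G)\le 3$.
   Context: For an enumeration $L=x_1x_2\dots x_n$ of the vertices of $G$, an edge $x_ix_j$ is a jump with respect to $L$ if $|i-j|>1$. Two jumps $x_lx_m$ and $x_px_q$ with $l<m$ and $p<q$ are secant with respect to $L$ if $l<p<m<q$ or $p<l<q<m$. *)

theory Defs
  imports Main
begin

definition simple_graph :: "'a set \<Rightarrow> ('a \<Rightarrow> 'a \<Rightarrow> bool) \<Rightarrow> bool" where
  "simple_graph V E \<longleftrightarrow> finite V \<and> (\<forall>x y. E x y \<longrightarrow> x \<in> V \<and> y \<in> V)
     \<and> (\<forall>x y. E x y \<longrightarrow> E y x) \<and> (\<forall>x. \<not> E x x)"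

text \<open>An enumeration of the vertices: a list x_1 ... x_n listing each vertex exactly once
(positions are 0-based list indices).\<close>
definition enumeration :: "'a set \<Rightarrow> 'a list \<Rightarrow> bool" where
  "enumeration V L \<longleftrightarrow> distinct L \<and> set L = V"

definition jump :: "('a \<Rightarrow> 'a \<Rightarrow> bool) \<Rightarrow> 'a list \<Rightarrow> nat \<Rightarrow> nat \<Rightarrow> bool" where
  "jump E L i j \<longleftrightarrow> i < length L \<and> j < length L \<and> E (L!i) (L!j)
      \<and> (i + 1 < j \<or> j + 1 < i)"

definition secant :: "('a \<Rightarrow> 'a \<Rightarrow> bool) \<Rightarrow> 'a list \<Rightarrow> nat \<Rightarrow> nat \<Rightarrow> nat \<Rightarrow> nat \<Rightarrow> bool" where
  "secant E L l m p q \<longleftrightarrow> jump E L l m \<and> jump E L p q \<and> l < m \<and> p < q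
      \<and> ((l < p \<and> p < m \<and> m < q) \<or> (p < l \<and> l < q \<and> q < m))"

definition no_secant_edges :: "('a \<Rightarrow> 'a \<Rightarrow> bool) \<Rightarrow> 'a list \<Rightarrow> bool" where
  "no_secant_edges E L \<longleftrightarrow> (\<forall>l m p q. \<not> secant E L l m p q)"

definition colorable :: "'a set \<Rightarrow> ('a \<Rightarrow> 'a \<Rightarrow> bool) \<Rightarrow> nat \<Rightarrow> bool" where
  "colorable V E k \<longleftrightarrow> (\<exists>c :: 'a \<Rightarrow> nat. (\<forall>v\<in>V. c v < k)
      \<and> (\<forall>x y. E x y \<longrightarrow> c x \<noteq> c y))"

end

theory Submission
  imports Defs
begin

definition ncross :: "nat set \<Rightarrow> (nat \<Rightarrow> nat \<Rightarrow> bool) \<Rightarrow> bool" where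
  "ncross S R \<longleftrightarrow> finite S \<and> (\<forall>x y. R x y \<longrightarrow> x \<in> S \<and> y \<in> S)
     \<and> (\<forall>x y. R x y \<longrightarrow> R y x) \<and> (\<forall>x. \<not> R x x)
     \<and> (\<forall>a b c d. R a b \<longrightarrow> R c d \<longrightarrow> a < c \<longrightarrow> c < b \<longrightarrow> b < d \<longrightarrow> False)"

lemma key_pair:
  assumes "ncross S R" "S \<noteq> {}"
  shows "\<exists>v\<in>S. \<exists>p. \<forall>w1 w2. R v w1 \<longrightarrow> R v w2 \<longrightarrow> w1 \<noteq> p \<longrightarrow> w2 \<noteq> p \<longrightarrow> w1 = w2"
proof (cases "\<exists>a b. R a b \<and> a < b \<and> (\<exists>x\<in>S. a < x \<and> x < b)")
  case False
  define v where "v = Min S"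
  have fin: "finite S" using assms(1) unfolding ncross_def by blast
  have vS: "v \<in> S" using fin assms(2) v_def by simp
  have gt: "w > v" if "R v w" for w
  proof -
    have "w \<in> S" "w \<noteq> v" using that assms(1) unfolding ncross_def by blast+
    then show ?thesis using fin v_def by (metis Min_le order_le_neq_trans)
  qed
  have "w1 = w2" if "R v w1" "R v w2" for w1 w2
  proof (rule ccontr)
    assume "w1 \<noteq> w2"
    then consider "w1 < w2" | "w2 < w1" by linarith
    then show False
    proof cases
      case 1
      have "w1 \<in> S" using that assms(1) unfolding ncross_def by blast
      then show False using False that 1 gt by blast
    next
      case 2
      have "w2 \<in> S" using that assms(1) unfolding ncross_def by blast
      then show False using False that 2 gt by blast
    qed
  qed
  then show ?thesis using vS by blast
next
  case True
  then obtain a b where ab: "R a b \<and> a < b \<and> (\<exists>x\<in>S. a < x \<and> x < b)" by blast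
  obtain pr where pr: "(\<lambda>(a,b). R a b \<and> a < b \<and> (\<exists>x\<in>S. a < x \<and> x < b)) pr"
    and prmin: "\<forall>y. (\<lambda>(a,b). R a b \<and> a < b \<and> (\<exists>x\<in>S. a < x \<and> x < b)) y
        \<longrightarrow> (\<lambda>(a,b). b - a) pr \<le> (\<lambda>(a,b). b - a) y"
    using ex_has_least_nat[of "\<lambda>(a,b). R a b \<and> a < b \<and> (\<exists>x\<in>S. a < x \<and> x < b)" "(a,b)"
        "\<lambda>(a,b). b - a"] ab by auto
  obtain l m where lm: "pr = (l,m)" by (cases pr)
  have Rlm: "R l m" "l < m" and ex: "\<exists>x\<in>S. l < x \<and> x < m" using pr lm by auto
  have minl: "m - l \<le> b' - a'" if "R a' b'" "a' < b'" "x \<in> S" "a' < x" "x < b'" for a' b' x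
    using prmin[rule_format, of "(a',b')"] that lm by auto
  have fin: "finite S" using assms(1) unfolding ncross_def by blast
  define T where "T = {x\<in>S. l < x \<and> x < m}"
  have finT: "finite T" "T \<noteq> {}" using fin ex T_def by auto
  define v where "v = Min T"
  have vT: "v \<in> T" using finT v_def by simp
  hence vS: "v \<in> S" "l < v" "v < m" using T_def by auto
  have vmin: "v \<le> x" if "x \<in> S" "l < x" "x < m" for x
    using that finT v_def T_def by auto
  have cr: "\<And>a b c d. R a b \<Longrightarrow> R c d \<Longrightarrow> a < c \<Longrightarrow> c < b \<Longrightarrow> b < d \<Longrightarrow> False"
    using assms(1) unfolding ncross_def by blast
  have sym: "\<And>x y. R x y \<Longrightarrow> R y x" and irr: "\<And>x. \<not> R x x"
    and inS: "\<And>x y. R x y \<Longrightarrow> x \<in> S \<and> y \<in> S"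
    using assms(1) unfolding ncross_def by blast+
  have nb: "v < w \<and> w \<le> m \<and> \<not> (\<exists>x\<in>S. v < x \<and> x < w)" if "R v w" "w \<noteq> l" for w
  proof -
    have wS: "w \<in> S" using inS that by blast
    have "\<not> w < l" using cr[of w v l m] sym[OF that(1)] Rlm vS by auto
    moreover have "\<not> (l < w \<and> w < v)" using vmin[OF wS] vS by auto
    moreover have "w \<noteq> v" using irr that by auto
    moreover have "\<not> m < w" using cr[of l m v w] Rlm that vS by auto
    ultimately have 1: "v < w" "w \<le> m" using that by auto
    have "\<not> (\<exists>x\<in>S. v < x \<and> x < w)"
    proof
      assume "\<exists>x\<in>S. v < x \<and> x < w"
      then obtain x where "x \<in> S" "v < x" "x < w" by blast
      from minl[OF that(1) 1(1) this] 1 vS show False by linarith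
    qed
    with 1 show ?thesis by blast
  qed
  have "w1 = w2" if "R v w1" "R v w2" "w1 \<noteq> l" "w2 \<noteq> l" for w1 w2
  proof (rule ccontr)
    assume "w1 \<noteq> w2"
    then consider "w1 < w2" | "w2 < w1" by linarith
    then show False
    proof cases
      case 1
      then show False using nb[OF that(1,3)] nb[OF that(2,4)] inS that by blast
    next
      case 2
      then show False using nb[OF that(1,3)] nb[OF that(2,4)] inS that by blast
    qed
  qed
  then show ?thesis using vS by blast
qed

lemma key:
  assumes "ncross S R" "S \<noteq> {}"
  shows "\<exists>v\<in>S. \<exists>p q. \<forall>w. R v w \<longrightarrow> w = p \<or> w = q"
proof -
  obtain v p where v: "v \<in> S" and h: "\<forall>w1 w2. R v w1 \<longrightarrow> R v w2 \<longrightarrow> w1 \<noteq> p \<longrightarrow> w2 \<noteq> p \<longrightarrow> w1 = w2"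
    using key_pair[OF assms] by blast
  show ?thesis
  proof (cases "\<exists>w. R v w \<and> w \<noteq> p")
    case True
    then obtain q where "R v q" "q \<noteq> p" by blast
    then have "\<forall>w. R v w \<longrightarrow> w = p \<or> w = q" using h by blast
    then show ?thesis using v by blast
  next
    case False
    then show ?thesis using v by blast
  qed
qed

lemma col:
  assumes "ncross S R"
  shows "\<exists>c. (\<forall>x\<in>S. c x < (3::nat)) \<and> (\<forall>x y. R x y \<longrightarrow> c x \<noteq> c y)"
  using assms
proof (induction "card S" arbitrary: S R)
  case 0
  then have "S = {}" unfolding ncross_def by auto
  then have "\<forall>x y. \<not> R x y" using 0 unfolding ncross_def by blast
  then show ?case using \<open>S = {}\<close> by blast
next
  case (Suc n)
  have fin: "finite S" using Suc.prems unfolding ncross_def by blast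
  have ne: "S \<noteq> {}" using Suc.hyps(2) by auto
  obtain v p q where vS: "v \<in> S" and nb: "\<forall>w. R v w \<longrightarrow> w = p \<or> w = q"
    using key[OF Suc.prems ne] by blast
  define R' where "R' = (\<lambda>x y. R x y \<and> x \<noteq> v \<and> y \<noteq> v)"
  have nc: "ncross (S - {v}) R'" using Suc.prems unfolding ncross_def R'_def by blast
  have "n = card (S - {v})" using Suc.hyps(2) vS fin by simp
  from Suc.hyps(1)[OF this nc] obtain c where
    c: "\<forall>x\<in>S - {v}. c x < (3::nat)" "\<forall>x y. R' x y \<longrightarrow> c x \<noteq> c y" by blast
  obtain k :: nat where k: "k < 3" "k \<noteq> c p" "k \<noteq> c q"
  proof -
    have "\<exists>k::nat. k < 3 \<and> k \<noteq> c p \<and> k \<noteq> c q" by presburger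
    then show ?thesis using that by blast
  qed
  define c' where "c' = c(v := k)"
  have sym: "\<And>x y. R x y \<Longrightarrow> R y x" and irr: "\<And>x. \<not> R x x"
    using Suc.prems unfolding ncross_def by blast+
  have "\<forall>x\<in>S. c' x < 3" using c(1) k(1) c'_def by auto
  moreover have "\<forall>x y. R x y \<longrightarrow> c' x \<noteq> c' y"
  proof (intro allI impI)
    fix x y assume r: "R x y"
    show "c' x \<noteq> c' y"
    proof (cases "x = v")
      case True
      then have "y \<noteq> v" "y = p \<or> y = q" using r irr nb by auto
      then show ?thesis using True k c'_def by auto
    next
      case False
      show ?thesis
      proof (cases "y = v")
        case True
        then have "x = p \<or> x = q" using r sym nb by blast
        then show ?thesis using True False k c'_def by auto
      next
        case False2: False
        then show ?thesis using False c(2) r R'_def c'_def by auto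
      qed
    qed
  qed
  ultimately show ?case by blast
qed

theorem lemma2:
  fixes V :: "'a set" and E :: "'a \<Rightarrow> 'a \<Rightarrow> bool" and L :: "'a list"
  assumes "simple_graph V E"
    and "enumeration V L"
    and "no_secant_edges E L"
  shows "colorable V E 3"
proof -
  define R where "R = (\<lambda>i j. i < length L \<and> j < length L \<and> E (L!i) (L!j))"
  have nc: "ncross {0..<length L} R"
    unfolding ncross_def
  proof (intro conjI allI impI)
    show "finite {0..<length L}" by simp
    fix x y assume "R x y" then show "x \<in> {0..<length L}" "y \<in> {0..<length L}"
      unfolding R_def by auto
  next
    fix x y assume "R x y" then show "R y x" using assms(1) unfolding R_def simple_graph_def by blast
  next
    fix x show "\<not> R x x" using assms(1) unfolding R_def simple_graph_def by blast
  next
    fix a b c d assume h: "R a b" "R c d" "a < c" "c < b" "b < d"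
    have "secant E L a b c d" unfolding secant_def jump_def using h R_def by auto
    then show False using assms(3) unfolding no_secant_edges_def by blast
  qed
  obtain c where c: "\<forall>x\<in>{0..<length L}. c x < (3::nat)" "\<forall>x y. R x y \<longrightarrow> c x \<noteq> c y"
    using col[OF nc] by blast
  define ix where "ix = (\<lambda>x. SOME i. i < length L \<and> L!i = x)"
  have ix: "ix x < length L \<and> L!(ix x) = x" if "x \<in> V" for x
  proof -
    have "x \<in> set L" using that assms(2) unfolding enumeration_def by blast
    then have "\<exists>i. i < length L \<and> L!i = x" by (simp add: in_set_conv_nth)
    then show ?thesis unfolding ix_def by (rule someI_ex)
  qed
  have inV: "\<And>x y. E x y \<Longrightarrow> x \<in> V \<and> y \<in> V" using assms(1) unfolding simple_graph_def by blast
  show ?thesis unfolding colorable_def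
  proof (intro exI[of _ "\<lambda>x. c (ix x)"] conjI ballI allI impI)
    fix v assume "v \<in> V" then show "c (ix v) < 3" using ix c(1) by auto
  next
    fix x y assume e: "E x y"
    then have "R (ix x) (ix y)" using ix inV unfolding R_def by auto
    then show "c (ix x) \<noteq> c (ix y)" using c(2) by blast
  qed
qed

end
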